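(* Let $n\ge0$, $r,s\ge1$, and suppose the variety $\mathcal V$ has $n+2$ Gumm terms and satisfies $$\alpha(\beta\circ_{2r+1}\gamma)\subseteq\alpha(\gamma\circ\beta)\circ(\alpha\gamma\circ_s\alpha\beta).$$ Then $\mathcal V$ satisfies $\alpha(\beta\circ_{4r+1}\gamma)\subseteq\alpha(\gamma\circ\beta)\circ(\alpha\gamma\circ_{s+4rn}\alpha\beta)$, and more generally, for every $q\ge1$, $$\alpha(\beta\circ_{2^qr+1}\gamma)\subseteq\alpha(\gamma\circ\beta)\circ(\alpha\gamma\circ_{s+(2^{q+1}-4)rn}\alpha\beta).$$
   Context: Here $\alpha,\beta,\gamma$ range over congruences of algebras in $\mathcal V$. $\circ$ is relational composition, juxtaposition is intersection. For relations $X,Y$ and $m\ge1$, $X\circ_m Y$ denotes $X\circ Y\circ X\circ\cdots$ with $m$ factors. A variety has $n+2$ Gumm terms if it has ternary terms $p,j_1,\dots,j_{n+1}$ satisfying: $x=j_i(x,y,x)$ for all $i$; $x=p(x,z,z)$; $p(x,x,z)=j_1(x,x,z)$; $j_i(x,z,z)=j_{i+1}(x,z,z)$ for odd $i\le n$; $j_i(x,x,z)=j_{i+1}(x,x,z)$ for even $i\le n$; $j_{n+1}(x,y,z)=z$. *)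

theory Defs
  imports Main
begin

datatype ('f, 'v) trm = Var 'v | Fn 'f "('f, 'v) trm list"

fun wf_trm :: "('f \<Rightarrow> nat) \<Rightarrow> ('f, 'v) trm \<Rightarrow> bool" where
  "wf_trm ar (Var v) = True"
| "wf_trm ar (Fn f ts) = (length ts = ar f \<and> (\<forall>t\<in>set ts. wf_trm ar t))"

fun subst :: "('v \<Rightarrow> ('f, 'w) trm) \<Rightarrow> ('f, 'v) trm \<Rightarrow> ('f, 'w) trm" where
  "subst \<sigma> (Var v) = \<sigma> v"
| "subst \<sigma> (Fn f ts) = Fn f (map (subst \<sigma>) ts)"

fun vars :: "('f, 'v) trm \<Rightarrow> 'v set" where
  "vars (Var v) = {v}"
| "vars (Fn f ts) = (\<Union>t\<in>set ts. vars t)"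

definition algebra :: "('f \<Rightarrow> nat) \<Rightarrow> 'a set \<Rightarrow> ('f \<Rightarrow> 'a list \<Rightarrow> 'a) \<Rightarrow> bool" where
  "algebra ar A ops \<longleftrightarrow>
     (\<forall>f xs. length xs = ar f \<and> set xs \<subseteq> A \<longrightarrow> ops f xs \<in> A)"

fun eval :: "('f \<Rightarrow> 'a list \<Rightarrow> 'a) \<Rightarrow> ('v \<Rightarrow> 'a) \<Rightarrow> ('f, 'v) trm \<Rightarrow> 'a" where
  "eval ops \<rho> (Var v) = \<rho> v"
| "eval ops \<rho> (Fn f ts) = ops f (map (eval ops \<rho>) ts)"

definition model ::
  "('f \<Rightarrow> nat) \<Rightarrow> (('f, nat) trm \<times> ('f, nat) trm) set \<Rightarrow> 'a set \<Rightarrow> ('f \<Rightarrow> 'a list \<Rightarrow> 'a) \<Rightarrow> bool" where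
  "model ar E A ops \<longleftrightarrow> algebra ar A ops \<and>
     (\<forall>(s, t)\<in>E. \<forall>\<rho>. (\<forall>v. \<rho> v \<in> A) \<longrightarrow> eval ops \<rho> s = eval ops \<rho> t)"

definition wf_eqs :: "('f \<Rightarrow> nat) \<Rightarrow> (('f, nat) trm \<times> ('f, nat) trm) set \<Rightarrow> bool" where
  "wf_eqs ar E \<longleftrightarrow> (\<forall>(s, t)\<in>E. wf_trm ar s \<and> wf_trm ar t)"

inductive eq_deriv ::
  "('f \<Rightarrow> nat) \<Rightarrow> (('f, nat) trm \<times> ('f, nat) trm) set \<Rightarrow> ('f, nat) trm \<Rightarrow> ('f, nat) trm \<Rightarrow> bool"
  for ar E where
  ax: "(s, t) \<in> E \<Longrightarrow> eq_deriv ar E (subst \<sigma> s) (subst \<sigma> t)"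
| refl: "eq_deriv ar E t t"
| sym: "eq_deriv ar E s t \<Longrightarrow> eq_deriv ar E t s"
| trans: "eq_deriv ar E s t \<Longrightarrow> eq_deriv ar E t u \<Longrightarrow> eq_deriv ar E s u"
| cong: "length ss = ar f \<Longrightarrow> length ts = ar f \<Longrightarrow>
         (\<forall>i<ar f. eq_deriv ar E (ss ! i) (ts ! i)) \<Longrightarrow> eq_deriv ar E (Fn f ss) (Fn f ts)"

abbreviation xv :: "('f, nat) trm" where "xv \<equiv> Var 0"
abbreviation yv :: "('f, nat) trm" where "yv \<equiv> Var 1"
abbreviation zv :: "('f, nat) trm" where "zv \<equiv> Var 2"

definition app3 :: "('f, nat) trm \<Rightarrow> ('f, nat) trm \<Rightarrow> ('f, nat) trm \<Rightarrow> ('f, nat) trm \<Rightarrow> ('f, nat) trm" where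
  "app3 t a b c = subst (\<lambda>v. if v = 0 then a else if v = 1 then b else if v = 2 then c else Var v) t"

definition ternary :: "('f \<Rightarrow> nat) \<Rightarrow> ('f, nat) trm \<Rightarrow> bool" where
  "ternary ar t \<longleftrightarrow> wf_trm ar t \<and> vars t \<subseteq> {0, 1, 2}"

(* Mod E has n+2 Gumm terms p, j_1, ..., j_{n+1}; j_i is js ! (i - 1) *)
definition has_gumm_terms :: "('f \<Rightarrow> nat) \<Rightarrow> (('f, nat) trm \<times> ('f, nat) trm) set \<Rightarrow> nat \<Rightarrow> bool" where
  "has_gumm_terms ar E n \<longleftrightarrow>
    (\<exists>p js. length js = n + 1 \<and> ternary ar p \<and> (\<forall>j\<in>set js. ternary ar j) \<and>
      (let J = (\<lambda>i. js ! (i - 1)); D = eq_deriv ar E in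
        (\<forall>i\<in>{1..n+1}. D xv (app3 (J i) xv yv xv)) \<and>
        D xv (app3 p xv zv zv) \<and>
        D (app3 p xv xv zv) (app3 (J 1) xv xv zv) \<and>
        (\<forall>i\<in>{1..n}. odd i \<longrightarrow> D (app3 (J i) xv zv zv) (app3 (J (i + 1)) xv zv zv)) \<and>
        (\<forall>i\<in>{1..n}. even i \<longrightarrow> D (app3 (J i) xv xv zv) (app3 (J (i + 1)) xv xv zv)) \<and>
        D (app3 (J (n + 1)) xv yv zv) zv))"

definition congruence :: "('f \<Rightarrow> nat) \<Rightarrow> 'a set \<Rightarrow> ('f \<Rightarrow> 'a list \<Rightarrow> 'a) \<Rightarrow> 'a rel \<Rightarrow> bool" where
  "congruence ar A ops \<theta> \<longleftrightarrow> equiv A \<theta> \<and>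
     (\<forall>f xs ys. length xs = ar f \<longrightarrow> length ys = ar f \<longrightarrow>
        (\<forall>i<ar f. (xs ! i, ys ! i) \<in> \<theta>) \<longrightarrow> (ops f xs, ops f ys) \<in> \<theta>)"

(* X \<circ>_m Y = X \<circ> Y \<circ> X \<circ> ... with m factors (m \<ge> 1) *)
fun comp_alt :: "nat \<Rightarrow> 'a rel \<Rightarrow> 'a rel \<Rightarrow> 'a rel" where
  "comp_alt 0 X Y = Id"
| "comp_alt (Suc 0) X Y = X"
| "comp_alt (Suc (Suc m)) X Y = X O comp_alt (Suc m) Y X"

definition satisfies_incl ::
  "('f \<Rightarrow> nat) \<Rightarrow> (('f, nat) trm \<times> ('f, nat) trm) set \<Rightarrow> 'a itself \<Rightarrow> nat \<Rightarrow> nat \<Rightarrow> bool" where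
  "satisfies_incl ar E _ k l \<longleftrightarrow>
    (\<forall>(A :: 'a set) ops \<alpha> \<beta> \<gamma>. model ar E A ops \<longrightarrow>
       congruence ar A ops \<alpha> \<longrightarrow> congruence ar A ops \<beta> \<longrightarrow> congruence ar A ops \<gamma> \<longrightarrow>
       \<alpha> \<inter> comp_alt k \<beta> \<gamma> \<subseteq> (\<alpha> \<inter> (\<gamma> O \<beta>)) O comp_alt l (\<alpha> \<inter> \<gamma>) (\<alpha> \<inter> \<beta>))"

end

theory Submission
  imports Defs
begin

lemma comp_alt_Suc: "comp_alt (Suc l) X Y = X O comp_alt l Y X"
  by (cases l) auto

lemma comp_alt_add:
  "comp_alt (k + l) X Y = comp_alt k X Y O (if even k then comp_alt l X Y else comp_alt l Y X)"
proof (induction k arbitrary: X Y)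
  case 0 then show ?case by simp
next
  case (Suc k)
  have "comp_alt (Suc k + l) X Y = X O comp_alt (k + l) Y X"
    by (simp add: comp_alt_Suc)
  also have "\<dots> = X O (comp_alt k Y X O (if even k then comp_alt l Y X else comp_alt l X Y))"
    using Suc by simp
  also have "\<dots> = comp_alt (Suc k) X Y O (if even (Suc k) then comp_alt l X Y else comp_alt l Y X)"
    by (simp add: comp_alt_Suc O_assoc)
  finally show ?case .
qed

lemma comp_alt_path:
  "(u, v) \<in> comp_alt k X Y \<longleftrightarrow>
   (\<exists>f. f 0 = u \<and> f k = v \<and> (\<forall>i<k. (f i, f (Suc i)) \<in> (if even i then X else Y)))"
proof (induction k arbitrary: X Y u)
  case 0 then show ?case by auto
next
  case (Suc k)
  show ?case
  proof
    assume "(u, v) \<in> comp_alt (Suc k) X Y"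
    then obtain u' where u': "(u, u') \<in> X" "(u', v) \<in> comp_alt k Y X"
      by (auto simp: comp_alt_Suc)
    then obtain g where g: "g 0 = u'" "g k = v" "\<forall>i<k. (g i, g (Suc i)) \<in> (if even i then Y else X)"
      using Suc by blast
    define f where "f = (\<lambda>i. if i = 0 then u else g (i - 1))"
    have "\<forall>i<Suc k. (f i, f (Suc i)) \<in> (if even i then X else Y)"
    proof (intro allI impI)
      fix i assume "i < Suc k"
      show "(f i, f (Suc i)) \<in> (if even i then X else Y)"
      proof (cases i)
        case 0 then show ?thesis using u' g by (simp add: f_def)
      next
        case (Suc j)
        then have "j < k" using \<open>i < Suc k\<close> by simp
        then show ?thesis using g(3) Suc by (auto simp: f_def split: if_splits)
      qed
    qed
    then show "\<exists>f. f 0 = u \<and> f (Suc k) = v \<and> (\<forall>i<Suc k. (f i, f (Suc i)) \<in> (if even i then X else Y))"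
      using g by (intro exI[of _ f]) (simp add: f_def)
  next
    assume "\<exists>f. f 0 = u \<and> f (Suc k) = v \<and> (\<forall>i<Suc k. (f i, f (Suc i)) \<in> (if even i then X else Y))"
    then obtain f where f: "f 0 = u" "f (Suc k) = v" "\<forall>i<Suc k. (f i, f (Suc i)) \<in> (if even i then X else Y)"
      by blast
    have "\<forall>i<k. (f (Suc i), f (Suc (Suc i))) \<in> (if even i then Y else X)"
      using f(3) by auto
    then have "(f 1, v) \<in> comp_alt k Y X"
      using f(2) by (intro Suc[THEN iffD2]) (auto intro!: exI[of _ "\<lambda>i. f (Suc i)"])
    moreover have "(u, f 1) \<in> X" using f(1,3) by (metis One_nat_def even_zero zero_less_Suc)
    ultimately show "(u, v) \<in> comp_alt (Suc k) X Y" by (auto simp: comp_alt_Suc)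
  qed
qed

lemma eval_subst: "eval ops \<rho> (subst \<sigma> t) = eval ops (\<lambda>v. eval ops \<rho> (\<sigma> v)) t"
  by (induction t) (auto cong: map_cong)

lemma eval_cong_vars: "(\<forall>v\<in>vars t. \<rho> v = \<rho>' v) \<Longrightarrow> eval ops \<rho> t = eval ops \<rho>' t"
  by (induction t) (auto cong: map_cong)

lemma wf_subst: "wf_trm ar t \<Longrightarrow> (\<forall>v. wf_trm ar (\<sigma> v)) \<Longrightarrow> wf_trm ar (subst \<sigma> t)"
  by (induction t) auto

lemma eval_in: "algebra ar A ops \<Longrightarrow> wf_trm ar t \<Longrightarrow> (\<forall>v\<in>vars t. \<rho> v \<in> A) \<Longrightarrow> eval ops \<rho> t \<in> A"
proof (induction t)
  case (Var x) then show ?case by simp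
next
  case (Fn f ts)
  have "set (map (eval ops \<rho>) ts) \<subseteq> A" using Fn by auto
  moreover have "length (map (eval ops \<rho>) ts) = ar f" using Fn by simp
  ultimately show ?case using Fn.prems(1) unfolding algebra_def by simp
qed

definition opsA :: "('f \<Rightarrow> nat) \<Rightarrow> 'a set \<Rightarrow> 'a \<Rightarrow> ('f \<Rightarrow> 'a list \<Rightarrow> 'a) \<Rightarrow> 'f \<Rightarrow> 'a list \<Rightarrow> 'a" where
  "opsA ar A a0 ops f xs = (if length xs = ar f \<and> set xs \<subseteq> A then ops f xs else a0)"

lemma eval_opsA: "algebra ar A ops \<Longrightarrow> wf_trm ar t \<Longrightarrow> (\<forall>v\<in>vars t. \<rho> v \<in> A) \<Longrightarrow>
   eval (opsA ar A a0 ops) \<rho> t = eval ops \<rho> t"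
proof (induction t)
  case (Var x) then show ?case by simp
next
  case (Fn f ts)
  then have m: "map (eval (opsA ar A a0 ops) \<rho>) ts = map (eval ops \<rho>) ts" by auto
  have st: "set (map (eval ops \<rho>) ts) \<subseteq> A" using Fn eval_in by fastforce
  have "eval (opsA ar A a0 ops) \<rho> (Fn f ts) = opsA ar A a0 ops f (map (eval ops \<rho>) ts)"
    by (simp only: eval.simps m)
  also have "\<dots> = ops f (map (eval ops \<rho>) ts)" using st Fn by (simp add: opsA_def)
  finally show ?case by simp
qed

lemma eval_opsA_in: "algebra ar A ops \<Longrightarrow> a0 \<in> A \<Longrightarrow> (\<forall>v. \<rho> v \<in> A) \<Longrightarrow> eval (opsA ar A a0 ops) \<rho> t \<in> A"
  by (induction t) (auto simp: opsA_def algebra_def)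

lemma sound_opsA:
  assumes "eq_deriv ar E s t" "model ar E A ops" "wf_eqs ar E" "a0 \<in> A"
  shows "\<forall>\<rho>. (\<forall>v. \<rho> v \<in> A) \<longrightarrow> eval (opsA ar A a0 ops) \<rho> s = eval (opsA ar A a0 ops) \<rho> t"
  using assms(1)
proof (induction rule: eq_deriv.induct)
  case (ax s t \<sigma>)
  show ?case
  proof (intro allI impI)
    fix \<rho> :: "nat \<Rightarrow> _" assume \<rho>: "\<forall>v. \<rho> v \<in> A"
    let ?o = "opsA ar A a0 ops"
    define \<rho>' where "\<rho>' = (\<lambda>v. eval ?o \<rho> (\<sigma> v))"
    have alg: "algebra ar A ops" using assms(2) by (simp add: model_def)
    have r': "\<forall>v. \<rho>' v \<in> A" unfolding \<rho>'_def using eval_opsA_in[OF alg assms(4) \<rho>] by blast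
    have wf: "wf_trm ar s" "wf_trm ar t" using ax assms(3) by (auto simp: wf_eqs_def)
    have "eval ?o \<rho> (subst \<sigma> s) = eval ?o \<rho>' s" by (simp add: eval_subst \<rho>'_def)
    also have "\<dots> = eval ops \<rho>' s" using eval_opsA[OF alg wf(1)] r' by blast
    also have "\<dots> = eval ops \<rho>' t" using assms(2) ax r' by (auto simp: model_def)
    also have "\<dots> = eval ?o \<rho>' t" using eval_opsA[OF alg wf(2)] r' by metis
    also have "\<dots> = eval ?o \<rho> (subst \<sigma> t)" by (simp add: eval_subst \<rho>'_def)
    finally show "eval ?o \<rho> (subst \<sigma> s) = eval ?o \<rho> (subst \<sigma> t)" .
  qed
next
  case (refl t) then show ?case by simp
next
  case (sym s t) then show ?case by simp
next
  case (trans s t u) then show ?case by simp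
next
  case (cong ss f ts)
  show ?case
  proof (intro allI impI)
    fix \<rho> :: "nat \<Rightarrow> _" assume \<rho>: "\<forall>v. \<rho> v \<in> A"
    have "map (eval (opsA ar A a0 ops) \<rho>) ss = map (eval (opsA ar A a0 ops) \<rho>) ts"
      using cong \<rho> by (intro nth_equalityI) auto
    then show "eval (opsA ar A a0 ops) \<rho> (Fn f ss) = eval (opsA ar A a0 ops) \<rho> (Fn f ts)" by simp
  qed
qed

lemma eq_sound:
  assumes "eq_deriv ar E s t" "model ar E A ops" "wf_eqs ar E" "wf_trm ar s" "wf_trm ar t"
    "\<forall>v. \<rho> v \<in> A"
  shows "eval ops \<rho> s = eval ops \<rho> t"
proof -
  have alg: "algebra ar A ops" using assms(2) by (simp add: model_def)
  have a0: "\<rho> 0 \<in> A" using assms(6) by blast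
  have "eval ops \<rho> s = eval (opsA ar A (\<rho> 0) ops) \<rho> s" using eval_opsA[OF alg assms(4)] assms(6) by metis
  also have "\<dots> = eval (opsA ar A (\<rho> 0) ops) \<rho> t" using sound_opsA[OF assms(1-3) a0] assms(6) by blast
  also have "\<dots> = eval ops \<rho> t" using eval_opsA[OF alg assms(5)] assms(6) by metis
  finally show ?thesis .
qed

lemma eval_compat:
  "congruence ar A ops \<theta> \<Longrightarrow> wf_trm ar t \<Longrightarrow> (\<forall>v\<in>vars t. (\<rho> v, \<rho>' v) \<in> \<theta>) \<Longrightarrow>
   (eval ops \<rho> t, eval ops \<rho>' t) \<in> \<theta>"
proof (induction t)
  case (Var x) then show ?case by simp
next
  case (Fn f ts)
  have "(ops f (map (eval ops \<rho>) ts), ops f (map (eval ops \<rho>') ts)) \<in> \<theta>"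
    using Fn(2) unfolding congruence_def
    apply (elim conjE)
    apply (erule allE[of _ f], erule allE[of _ "map (eval ops \<rho>) ts"], erule allE[of _ "map (eval ops \<rho>') ts"])
    using Fn by auto
  then show ?case by simp
qed

definition tf :: "('f \<Rightarrow> 'a list \<Rightarrow> 'a) \<Rightarrow> ('f, nat) trm \<Rightarrow> 'a \<Rightarrow> 'a \<Rightarrow> 'a \<Rightarrow> 'a" where
  "tf ops t u v w = eval ops (\<lambda>i. if i = 0 then u else if i = 1 then v else w) t"

lemma eval_app3: "vars t \<subseteq> {0,1,2} \<Longrightarrow>
  eval ops \<rho> (app3 t (Var i) (Var j) (Var k)) = tf ops t (\<rho> i) (\<rho> j) (\<rho> k)"
  unfolding app3_def tf_def eval_subst
  by (rule eval_cong_vars) auto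

lemma wf_app3: "wf_trm ar t \<Longrightarrow> wf_trm ar (app3 t (Var i) (Var j) (Var k))"
  unfolding app3_def by (rule wf_subst) auto

lemma seg:
  assumes "\<forall>m<Suc k. (g m, g (Suc m)) \<in> (if even m then X else Y)"
  shows "(g 1, g (Suc k)) \<in> comp_alt k Y X"
  unfolding comp_alt_path
  using assms by (intro exI[of _ "\<lambda>i. g (Suc i)"]) auto

lemma seg2:
  assumes "\<forall>m<Suc k. (g m, g (Suc m)) \<in> (if even m then X else Y)"
    and "trans X" "even k" "k \<ge> 1" "g (Suc k) = g' 0" "(g' 0, g' 1) \<in> X"
  shows "(g 1, g' 1) \<in> comp_alt k Y X"
  unfolding comp_alt_path
proof (intro exI[of _ "\<lambda>i. if i < k then g (Suc i) else g' 1"] conjI allI impI)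
  fix i assume i: "i < k"
  show "((if i < k then g (Suc i) else g' 1), (if Suc i < k then g (Suc (Suc i)) else g' 1))
        \<in> (if even i then Y else X)"
  proof (cases "Suc i < k")
    case True
    then show ?thesis using assms(1)[rule_format, of "Suc i"] i by auto
  next
    case False
    then have ik: "i = k - 1" "Suc i = k" using i by auto
    have "(g k, g (Suc k)) \<in> X" using assms(1)[rule_format, of k] assms(3) by auto
    then have "(g k, g' 1) \<in> X" using assms(2,5,6) by (metis transD)
    moreover have "odd i" using ik assms(3,4) by (metis add_diff_cancel_left' even_Suc plus_1_eq_Suc)
    ultimately show ?thesis using ik by auto
  qed
qed (use assms in auto)

lemma ca_chain:
  assumes "trans X" "even k" "k \<ge> 1" "n \<ge> 1"
    "\<forall>i\<in>{1..n}. \<forall>m<Suc k. (h i m, h i (Suc m)) \<in> (if even m then X else Y)"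
    "\<forall>i. 1 \<le> i \<and> i < n \<longrightarrow> h i (Suc k) = h (Suc i) 0"
    "h n (Suc k) = c"
  shows "(h 1 1, c) \<in> comp_alt (k * n) Y X"
  using assms(4-7)
proof (induction n arbitrary: h)
  case 0 then show ?case by simp
next
  case (Suc n)
  show ?case
  proof (cases "n = 0")
    case True
    then show ?thesis using seg[of k "h 1" X Y] Suc.prems by auto
  next
    case False
    have IH: "(h 2 1, c) \<in> comp_alt (k * n) Y X"
      using Suc.IH[of "\<lambda>i. h (Suc i)"] Suc.prems False by (auto simp: numeral_2_eq_2)
    have "(h 1 1, h 2 1) \<in> comp_alt k Y X"
    proof (rule seg2[of k "h 1" X Y "h 2", OF _ assms(1-3)])
      show "\<forall>m<Suc k. (h 1 m, h 1 (Suc m)) \<in> (if even m then X else Y)" using Suc.prems by auto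
      show "h 1 (Suc k) = h 2 0" using Suc.prems False by (auto simp: numeral_2_eq_2)
      have "2 \<in> {1..Suc n}" using False by auto
      then show "(h 2 0, h 2 1) \<in> X" using Suc.prems(2) by fastforce
    qed
    then have "(h 1 1, c) \<in> comp_alt k Y X O comp_alt (k * n) Y X" using IH by blast
    then show ?thesis using comp_alt_add[of k "k * n" Y X] assms(2) by simp
  qed
qed

lemma ca_combine:
  assumes "(a, w) \<in> Q O comp_alt s Y X" "(w, c) \<in> comp_alt l Y X" "trans Y" "(c, c) \<in> X" "(c, c) \<in> Y"
  shows "(a, c) \<in> Q O comp_alt (s + l) Y X"
proof -
  obtain a' where a': "(a, a') \<in> Q" "(a', w) \<in> comp_alt s Y X" using assms(1) by blast
  have "(a', c) \<in> comp_alt (s + l) Y X"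
  proof (cases "even s")
    case True
    then show ?thesis using comp_alt_add[of s l Y X] a' assms(2) by auto
  next
    case odd: False
    show ?thesis
    proof (cases l)
      case 0 then show ?thesis using assms(2) a' by simp
    next
      case (Suc l')
      have s1: "comp_alt s Y X = comp_alt (s - 1) Y X O Y"
        using comp_alt_add[of "s - 1" 1 Y X] odd by (simp add: odd_pos)
      obtain e where e: "(a', e) \<in> comp_alt (s - 1) Y X" "(e, w) \<in> Y" using a'(2) s1 by auto
      obtain f where f: "(w, f) \<in> Y" "(f, c) \<in> comp_alt l' X Y"
        using assms(2) Suc by (auto simp: comp_alt_Suc)
      have "(e, f) \<in> Y" using e f assms(3) by (metis transD)
      then have "(e, c) \<in> comp_alt (Suc l') Y X" using f by (auto simp: comp_alt_Suc)
      then have "(a', c) \<in> comp_alt (s - 1 + Suc l') Y X"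
        using comp_alt_add[of "s - 1" "Suc l'" Y X] odd e by auto
      moreover have "s - 1 + Suc l' = s + l'" using odd_pos[OF odd] by simp
      ultimately have c1: "(a', c) \<in> comp_alt (s + l') Y X" by metis
      have "comp_alt (s + l' + 1) Y X = comp_alt (s + l') Y X O (if even (s + l') then Y else X)"
        using comp_alt_add[of "s + l'" 1 Y X] by simp
      then have "(a', c) \<in> comp_alt (s + l' + 1) Y X" using c1 assms(4,5) by auto
      then show ?thesis using Suc by simp
    qed
  qed
  then show ?thesis using a'(1) by blast
qed

lemma ca_core:
  fixes A :: "'a set" and \<alpha> \<beta> \<gamma> :: "'a rel" and P :: "'a \<Rightarrow> 'a \<Rightarrow> 'a \<Rightarrow> 'a"
    and Jf :: "nat \<Rightarrow> 'a \<Rightarrow> 'a \<Rightarrow> 'a \<Rightarrow> 'a"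
  assumes eqv: "equiv A \<alpha>" "equiv A \<beta>" "equiv A \<gamma>"
  and cP: "\<And>\<theta> u u' v v' w w'. \<theta> \<in> {\<alpha>,\<beta>,\<gamma>} \<Longrightarrow> (u,u')\<in>\<theta> \<Longrightarrow> (v,v')\<in>\<theta> \<Longrightarrow> (w,w')\<in>\<theta> \<Longrightarrow>
        (P u v w, P u' v' w') \<in> \<theta>"
  and cJ: "\<And>\<theta> i u u' v v' w w'. \<theta> \<in> {\<alpha>,\<beta>,\<gamma>} \<Longrightarrow> i \<in> {1..n+1} \<Longrightarrow> (u,u')\<in>\<theta> \<Longrightarrow> (v,v')\<in>\<theta> \<Longrightarrow> (w,w')\<in>\<theta> \<Longrightarrow>
        (Jf i u v w, Jf i u' v' w') \<in> \<theta>"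
  and g1: "\<And>i u v. i \<in> {1..n+1} \<Longrightarrow> u \<in> A \<Longrightarrow> v \<in> A \<Longrightarrow> Jf i u v u = u"
  and g2: "\<And>u w. u \<in> A \<Longrightarrow> w \<in> A \<Longrightarrow> P u w w = u"
  and g3: "\<And>u w. u \<in> A \<Longrightarrow> w \<in> A \<Longrightarrow> P u u w = Jf 1 u u w"
  and g4: "\<And>i u w. i \<in> {1..n} \<Longrightarrow> odd i \<Longrightarrow> u \<in> A \<Longrightarrow> w \<in> A \<Longrightarrow> Jf i u w w = Jf (Suc i) u w w"
  and g5: "\<And>i u w. i \<in> {1..n} \<Longrightarrow> even i \<Longrightarrow> u \<in> A \<Longrightarrow> w \<in> A \<Longrightarrow> Jf i u u w = Jf (Suc i) u u w"
  and g6: "\<And>u v w. u \<in> A \<Longrightarrow> v \<in> A \<Longrightarrow> w \<in> A \<Longrightarrow> Jf (Suc n) u v w = w"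
  and H: "\<And>x y. (x,y) \<in> \<alpha> \<Longrightarrow> (x,y) \<in> comp_alt (2*r+1) \<beta> \<gamma> \<Longrightarrow>
        (x,y) \<in> (\<alpha> \<inter> (\<gamma> O \<beta>)) O comp_alt s (\<alpha> \<inter> \<gamma>) (\<alpha> \<inter> \<beta>)"
  and r: "r \<ge> 1"
  and ac: "(a,c) \<in> \<alpha>" "(a,c) \<in> comp_alt (4*r+1) \<beta> \<gamma>"
  shows "(a,c) \<in> (\<alpha> \<inter> (\<gamma> O \<beta>)) O comp_alt (s + 4*r*n) (\<alpha> \<inter> \<gamma>) (\<alpha> \<inter> \<beta>)"
proof -
  have sub: "\<alpha> \<subseteq> A \<times> A" "\<beta> \<subseteq> A \<times> A" "\<gamma> \<subseteq> A \<times> A" using eqv by (auto simp: equiv_def)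
  have rfl: "\<And>u. u \<in> A \<Longrightarrow> (u,u) \<in> \<alpha> \<and> (u,u) \<in> \<beta> \<and> (u,u) \<in> \<gamma>"
    using eqv by (auto simp: equiv_def refl_on_def)
  have sy: "\<And>u v \<theta>. \<theta> \<in> {\<alpha>,\<beta>,\<gamma>} \<Longrightarrow> (u,v) \<in> \<theta> \<Longrightarrow> (v,u) \<in> \<theta>"
    using eqv by (auto simp: equiv_def sym_def)
  have tr: "\<And>\<theta>. \<theta> \<in> {\<alpha>,\<beta>,\<gamma>} \<Longrightarrow> trans \<theta>"
    using eqv by (auto simp: equiv_def)
  obtain x where x0: "x 0 = a" and xK: "x (4*r+1) = c"
    and xs: "\<forall>i<4*r+1. (x i, x (Suc i)) \<in> (if even i then \<beta> else \<gamma>)"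
    using ac(2) unfolding comp_alt_path by blast
  have aA: "a \<in> A" and cA: "c \<in> A" using ac(1) sub by auto
  have xA: "\<And>m. m \<le> 4*r+1 \<Longrightarrow> x m \<in> A"
  proof -
    fix m assume m: "m \<le> 4*r+1"
    show "x m \<in> A"
    proof (cases m)
      case 0 then show ?thesis using x0 aA by simp
    next
      case (Suc j)
      then have "(x j, x m) \<in> (if even j then \<beta> else \<gamma>)" using xs m by auto
      then show ?thesis using sub by (auto split: if_splits)
    qed
  qed
  have xs': "\<And>m. m < 4*r+1 \<Longrightarrow> (x m, x (Suc m)) \<in> (if even m then \<beta> else \<gamma>)" using xs by blast
  have relin: "\<And>m. (if even m then \<beta> else \<gamma>) \<in> {\<alpha>,\<beta>,\<gamma>}" by auto
  have ja: "\<And>i y. i \<in> {1..n+1} \<Longrightarrow> y \<in> A \<Longrightarrow> (a, Jf i a y c) \<in> \<alpha>"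
  proof -
    fix i y assume i: "i \<in> {1..n+1}" and y: "y \<in> A"
    have "(Jf i a y a, Jf i a y c) \<in> \<alpha>" using cJ[of \<alpha> i] i rfl[OF aA] rfl[OF y] ac(1) by auto
    then show "(a, Jf i a y c) \<in> \<alpha>" using g1[OF i aA y] by simp
  qed
  define w where "w = Jf 1 a (x 1) c"
  have x1A: "x 1 \<in> A" using xA by simp
  have wa: "(a, w) \<in> \<alpha>" unfolding w_def using ja[OF _ x1A] by simp
  define z where "z = (\<lambda>m. if m = 2*r+1 then w else P a (x (2*r+1-m)) (x (2*r + max m 1)))"
  have zs: "\<forall>m<2*r+1. (z m, z (Suc m)) \<in> (if even m then \<beta> else \<gamma>)"
  proof (intro allI impI)
    fix m assume m: "m < 2*r+1"
    show "(z m, z (Suc m)) \<in> (if even m then \<beta> else \<gamma>)"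
    proof (cases "m < 2*r")
      case True
      have zm: "z m = P a (x (2*r+1-m)) (x (2*r + max m 1))" using m by (simp add: z_def)
      have zSm: "z (Suc m) = P a (x (2*r-m)) (x (2*r + Suc m))" using True
        by (simp add: z_def Suc_diff_le)
      have p2: "(x (2*r+1-m), x (2*r-m)) \<in> (if even m then \<beta> else \<gamma>)"
      proof -
        have "(x (2*r-m), x (Suc (2*r-m))) \<in> (if even (2*r-m) then \<beta> else \<gamma>)"
          using xs'[of "2*r-m"] True by simp
        moreover have "Suc (2*r-m) = 2*r+1-m" using True by simp
        moreover have "even (2*r-m) = even m" using True by (simp add: even_diff_nat)
        ultimately show ?thesis using sy[OF relin] by metis
      qed
      have p3: "(x (2*r + max m 1), x (2*r + Suc m)) \<in> (if even m then \<beta> else \<gamma>)"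
      proof (cases "m = 0")
        case True
        then show ?thesis using rfl[OF xA[of "2*r+1"]] by simp
      next
        case False
        then have "max m 1 = m" by simp
        moreover have "(x (2*r+m), x (Suc (2*r+m))) \<in> (if even (2*r+m) then \<beta> else \<gamma>)"
          using xs'[of "2*r+m"] True by simp
        ultimately show ?thesis by simp
      qed
      have p1: "(a, a) \<in> (if even m then \<beta> else \<gamma>)" using rfl[OF aA] by simp
      show ?thesis unfolding zm zSm using cP[OF relin p1 p2 p3] .
    next
      case False
      then have m2: "m = 2*r" using m by simp
      have zm: "z m = P a (x 1) (x (4*r))" using m2 r by (simp add: z_def)
      have zSm: "z (Suc m) = w" using m2 by (simp add: z_def)
      have "(x 0, x 1) \<in> \<beta>" using xs'[of 0] by simp
      then have b1: "(x 1, a) \<in> \<beta>" using sy[of \<beta>] x0 by simp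
      have b2: "(x (4*r), c) \<in> \<beta>" using xs'[of "4*r"] xK by simp
      have "(P a (x 1) (x (4*r)), P a a c) \<in> \<beta>" using cP[of \<beta>, OF _ _ b1 b2] rfl[OF aA] by simp
      moreover have "P a a c = Jf 1 a a c" using g3 aA cA by simp
      moreover have "(Jf 1 a a c, w) \<in> \<beta>" unfolding w_def
        using cJ[of \<beta> 1] rfl[OF aA] rfl[OF cA] xs'[of 0] x0 by simp
      ultimately have "(P a (x 1) (x (4*r)), w) \<in> \<beta>" using tr[of \<beta>] by (metis insertI1 insertI2 transD)
      then show ?thesis using zm zSm m2 by simp
    qed
  qed
  have z0: "z 0 = a" using g2[OF aA xA[of "2*r+1"]] by (simp add: z_def)
  have zK: "z (2*r+1) = w" by (simp add: z_def)
  have aw: "(a, w) \<in> comp_alt (2*r+1) \<beta> \<gamma>"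
    unfolding comp_alt_path using z0 zK zs by blast
  have part1: "(a, w) \<in> (\<alpha> \<inter> (\<gamma> O \<beta>)) O comp_alt s (\<alpha> \<inter> \<gamma>) (\<alpha> \<inter> \<beta>)"
    using H[OF wa aw] .
  have part2: "(w, c) \<in> comp_alt (4*r*n) (\<alpha> \<inter> \<gamma>) (\<alpha> \<inter> \<beta>)"
  proof (cases "n = 0")
    case True
    then have "w = c" unfolding w_def using g6[OF aA x1A cA] by simp
    then show ?thesis using True by simp
  next
    case False
    define h where "h = (\<lambda>i m. if odd i then Jf i a (x m) c else Jf i a (x (4*r+1-m)) c)"
    have trX: "trans (\<alpha> \<inter> \<beta>)" using tr[of \<alpha>] tr[of \<beta>] by (auto simp: trans_def)
    have steps: "\<forall>i\<in>{1..n}. \<forall>m<Suc (4*r). (h i m, h i (Suc m)) \<in> (if even m then \<alpha> \<inter> \<beta> else \<alpha> \<inter> \<gamma>)"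
    proof (intro ballI allI impI)
      fix i m assume i: "i \<in> {1..n}" and m: "m < Suc (4*r)"
      have i': "i \<in> {1..n+1}" using i by auto
      have "(x m, x (Suc m)) \<in> (if even m then \<beta> else \<gamma>) \<and>
            (x (4*r+1-m), x (4*r+1 - Suc m)) \<in> (if even m then \<beta> else \<gamma>)"
      proof
        show "(x m, x (Suc m)) \<in> (if even m then \<beta> else \<gamma>)" using xs' m by simp
        have "(x (4*r-m), x (Suc (4*r-m))) \<in> (if even (4*r-m) then \<beta> else \<gamma>)"
          using xs'[of "4*r-m"] m by simp
        moreover have "Suc (4*r-m) = 4*r+1-m" "4*r+1 - Suc m = 4*r-m" using m by auto
        moreover have "even (4*r-m) = even m" using m by (simp add: even_diff_nat)
        ultimately show "(x (4*r+1-m), x (4*r+1 - Suc m)) \<in> (if even m then \<beta> else \<gamma>)"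
          using sy[OF relin] by metis
      qed
      moreover have cjm: "\<And>y y'. (y,y') \<in> (if even m then \<beta> else \<gamma>) \<Longrightarrow>
          (Jf i a y c, Jf i a y' c) \<in> (if even m then \<beta> else \<gamma>)"
      proof -
        fix y y' assume yy: "(y,y') \<in> (if even m then \<beta> else \<gamma>)"
        have "(a,a) \<in> (if even m then \<beta> else \<gamma>)" "(c,c) \<in> (if even m then \<beta> else \<gamma>)"
          using rfl[OF aA] rfl[OF cA] by auto
        then show "(Jf i a y c, Jf i a y' c) \<in> (if even m then \<beta> else \<gamma>)"
          using cJ[OF relin i' _ yy] by blast
      qed
      ultimately have "(h i m, h i (Suc m)) \<in> (if even m then \<beta> else \<gamma>)"
        unfolding h_def by (cases "odd i") auto
      moreover have "(h i m, h i (Suc m)) \<in> \<alpha>"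
      proof -
        have "(a, h i m) \<in> \<alpha>" "(a, h i (Suc m)) \<in> \<alpha>"
          unfolding h_def using ja[OF i'] xA m by auto
        then show ?thesis using sy[of \<alpha>] tr[of \<alpha>] by (metis insertI1 transD)
      qed
      ultimately show "(h i m, h i (Suc m)) \<in> (if even m then \<alpha> \<inter> \<beta> else \<alpha> \<inter> \<gamma>)" by auto
    qed
    have junc: "\<forall>i. 1 \<le> i \<and> i < n \<longrightarrow> h i (Suc (4*r)) = h (Suc i) 0"
    proof (intro allI impI)
      fix i assume i: "1 \<le> i \<and> i < n"
      then have i': "i \<in> {1..n}" by auto
      show "h i (Suc (4*r)) = h (Suc i) 0"
      proof (cases "odd i")
        case True
        then show ?thesis unfolding h_def using g4[OF i' True aA cA] xK by simp
      next
        case False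
        then show ?thesis unfolding h_def using g5[OF i' _ aA cA] x0 by simp
      qed
    qed
    have hend: "h n (Suc (4*r)) = c"
    proof -
      have n': "n \<in> {1..n}" using False by auto
      show ?thesis
      proof (cases "odd n")
        case True
        then show ?thesis unfolding h_def using g4[OF n' True aA cA] g6[OF aA cA cA] xK by simp
      next
        case F: False
        then show ?thesis unfolding h_def using g5[OF n' _ aA cA] g6[OF aA aA cA] x0 by simp
      qed
    qed
    have "(h 1 1, c) \<in> comp_alt (4*r * n) (\<alpha> \<inter> \<gamma>) (\<alpha> \<inter> \<beta>)"
      using ca_chain[OF trX _ _ _ steps junc hend] r False by simp
    moreover have "h 1 1 = w" by (simp add: h_def w_def)
    ultimately show ?thesis by simp
  qed
  have trY: "trans (\<alpha> \<inter> \<gamma>)" using tr[of \<alpha>] tr[of \<gamma>] by (auto simp: trans_def)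
  show ?thesis using ca_combine[OF part1 part2 trY] rfl[OF cA] by simp
qed

lemma tf_compat:
  assumes "congruence ar A ops \<theta>" "ternary ar t" "(u,u')\<in>\<theta>" "(v,v')\<in>\<theta>" "(w,w')\<in>\<theta>"
  shows "(tf ops t u v w, tf ops t u' v' w') \<in> \<theta>"
  unfolding tf_def
  by (rule eval_compat[OF assms(1)]) (use assms(2-5) in \<open>auto simp: ternary_def\<close>)

lemma deriv_eval:
  assumes "eq_deriv ar E s t" "model ar E A ops" "wf_eqs ar E" "wf_trm ar s" "wf_trm ar t"
    "u \<in> A" "v \<in> A" "w \<in> A"
  shows "eval ops (\<lambda>i. if i = 0 then u else if i = 1 then v else w) s =
         eval ops (\<lambda>i. if i = 0 then u else if i = 1 then v else w) t"
  by (rule eq_sound[OF assms(1-5)]) (use assms(6-8) in auto)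

lemma gumm_step:
  fixes ar :: "'f \<Rightarrow> nat" and E :: "(('f, nat) trm \<times> ('f, nat) trm) set"
  assumes wf: "wf_eqs ar E" and r: "r \<ge> 1" and G: "has_gumm_terms ar E n"
    and H: "satisfies_incl ar E TYPE('a) (2 * r + 1) s"
  shows "satisfies_incl ar E TYPE('a) (4 * r + 1) (s + 4 * r * n)"
  unfolding satisfies_incl_def
proof (intro allI impI subsetI)
  fix A :: "'a set" and ops \<alpha> \<beta> \<gamma> ac
  assume M: "model ar E A ops" and ca: "congruence ar A ops \<alpha>" and cb: "congruence ar A ops \<beta>"
    and cg: "congruence ar A ops \<gamma>" and ac: "ac \<in> \<alpha> \<inter> comp_alt (4 * r + 1) \<beta> \<gamma>"
  obtain a c where acd: "ac = (a, c)" by force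
  obtain p js where len: "length js = n + 1" and tp: "ternary ar p" and tj: "\<forall>j\<in>set js. ternary ar j"
    and G1: "\<forall>i\<in>{1..n+1}. eq_deriv ar E xv (app3 (js ! (i - 1)) xv yv xv)"
    and G2: "eq_deriv ar E xv (app3 p xv zv zv)"
    and G3: "eq_deriv ar E (app3 p xv xv zv) (app3 (js ! (1 - 1)) xv xv zv)"
    and G4: "\<forall>i\<in>{1..n}. odd i \<longrightarrow> eq_deriv ar E (app3 (js ! (i - 1)) xv zv zv) (app3 (js ! (i + 1 - 1)) xv zv zv)"
    and G5: "\<forall>i\<in>{1..n}. even i \<longrightarrow> eq_deriv ar E (app3 (js ! (i - 1)) xv xv zv) (app3 (js ! (i + 1 - 1)) xv xv zv)"
    and G6: "eq_deriv ar E (app3 (js ! (n + 1 - 1)) xv yv zv) zv"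
    using G unfolding has_gumm_terms_def Let_def by (elim exE conjE) (rule that, assumption+)
  define P where "P = tf ops p"
  define Jf where "Jf = (\<lambda>i. tf ops (js ! (i - 1)))"
  have tJ: "\<And>i. i \<in> {1..n+1} \<Longrightarrow> ternary ar (js ! (i - 1))"
    using tj len by (auto intro: nth_mem)
  have tpv: "vars p \<subseteq> {0,1,2}" "wf_trm ar p" using tp by (auto simp: ternary_def)
  have tJv: "\<And>i. i \<in> {1..n+1} \<Longrightarrow> vars (js ! (i - 1)) \<subseteq> {0,1,2} \<and> wf_trm ar (js ! (i - 1))"
    using tJ by (auto simp: ternary_def)
  have eqv: "equiv A \<alpha>" "equiv A \<beta>" "equiv A \<gamma>" using ca cb cg by (auto simp: congruence_def)
  have cong3: "\<And>\<theta>. \<theta> \<in> {\<alpha>,\<beta>,\<gamma>} \<Longrightarrow> congruence ar A ops \<theta>" using ca cb cg by auto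
  show "ac \<in> (\<alpha> \<inter> (\<gamma> O \<beta>)) O comp_alt (s + 4 * r * n) (\<alpha> \<inter> \<gamma>) (\<alpha> \<inter> \<beta>)"
    unfolding acd
  proof (rule ca_core[where A = A and P = P and Jf = Jf and n = n and r = r and s = s])
    show "equiv A \<alpha>" "equiv A \<beta>" "equiv A \<gamma>" by (fact eqv)+
    show "\<And>\<theta> u u' v v' w w'. \<theta> \<in> {\<alpha>,\<beta>,\<gamma>} \<Longrightarrow> (u,u')\<in>\<theta> \<Longrightarrow> (v,v')\<in>\<theta> \<Longrightarrow> (w,w')\<in>\<theta> \<Longrightarrow>
        (P u v w, P u' v' w') \<in> \<theta>"
      unfolding P_def using tf_compat[OF cong3 tp] by blast
    show "\<And>\<theta> i u u' v v' w w'. \<theta> \<in> {\<alpha>,\<beta>,\<gamma>} \<Longrightarrow> i \<in> {1..n+1} \<Longrightarrow> (u,u')\<in>\<theta> \<Longrightarrow> (v,v')\<in>\<theta> \<Longrightarrow> (w,w')\<in>\<theta> \<Longrightarrow>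
        (Jf i u v w, Jf i u' v' w') \<in> \<theta>"
      unfolding Jf_def using tf_compat[OF cong3 tJ] by blast
    show "\<And>i u v. i \<in> {1..n+1} \<Longrightarrow> u \<in> A \<Longrightarrow> v \<in> A \<Longrightarrow> Jf i u v u = u"
    proof -
      fix i u v assume i: "i \<in> {1..n+1}" and uv: "u \<in> A" "v \<in> A"
      have "eval ops (\<lambda>l. if l = 0 then u else if l = 1 then v else u) xv =
            eval ops (\<lambda>l. if l = 0 then u else if l = 1 then v else u) (app3 (js ! (i - 1)) xv yv xv)"
        by (rule deriv_eval[OF _ M wf]) (use G1 i tJv[OF i] uv in \<open>auto intro: wf_app3\<close>)
      then show "Jf i u v u = u" unfolding Jf_def
        apply (simp only: eval_app3[OF conjunct1[OF tJv[OF i]]])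
        apply simp done
    qed
    show "\<And>u w. u \<in> A \<Longrightarrow> w \<in> A \<Longrightarrow> P u w w = u"
    proof -
      fix u w assume uv: "u \<in> A" "w \<in> A"
      have "eval ops (\<lambda>l. if l = 0 then u else if l = 1 then w else w) xv =
            eval ops (\<lambda>l. if l = 0 then u else if l = 1 then w else w) (app3 p xv zv zv)"
        by (rule deriv_eval[OF G2 M wf]) (use tpv uv in \<open>auto intro: wf_app3\<close>)
      then show "P u w w = u" unfolding P_def
        apply (simp only: eval_app3[OF tpv(1)])
        apply simp done
    qed
    show "\<And>u w. u \<in> A \<Longrightarrow> w \<in> A \<Longrightarrow> P u u w = Jf 1 u u w"
    proof -
      fix u w assume uv: "u \<in> A" "w \<in> A"
      have t1: "vars (js ! (1 - 1)) \<subseteq> {0,1,2} \<and> wf_trm ar (js ! (1 - 1))" using tJv[of 1] by simp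
      have "eval ops (\<lambda>l. if l = 0 then u else if l = 1 then u else w) (app3 p xv xv zv) =
            eval ops (\<lambda>l. if l = 0 then u else if l = 1 then u else w) (app3 (js ! (1 - 1)) xv xv zv)"
        by (rule deriv_eval[OF G3 M wf]) (use tpv t1 uv in \<open>auto intro: wf_app3\<close>)
      then show "P u u w = Jf 1 u u w" unfolding P_def Jf_def
        apply (simp only: eval_app3[OF tpv(1)] eval_app3[OF conjunct1[OF t1]])
        apply simp done
    qed
    show "\<And>i u w. i \<in> {1..n} \<Longrightarrow> odd i \<Longrightarrow> u \<in> A \<Longrightarrow> w \<in> A \<Longrightarrow> Jf i u w w = Jf (Suc i) u w w"
    proof -
      fix i u w assume i: "i \<in> {1..n}" and o: "odd i" and uv: "u \<in> A" "w \<in> A"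
      have t1: "vars (js ! (i - 1)) \<subseteq> {0,1,2} \<and> wf_trm ar (js ! (i - 1))" using tJv[of i] i by simp
      have t2: "vars (js ! (i + 1 - 1)) \<subseteq> {0,1,2} \<and> wf_trm ar (js ! (i + 1 - 1))" using tJv[of "i+1"] i by simp
      have "eval ops (\<lambda>l. if l = 0 then u else if l = 1 then w else w) (app3 (js ! (i - 1)) xv zv zv) =
            eval ops (\<lambda>l. if l = 0 then u else if l = 1 then w else w) (app3 (js ! (i + 1 - 1)) xv zv zv)"
        by (rule deriv_eval[OF _ M wf]) (use G4 i o t1 t2 uv in \<open>auto intro: wf_app3\<close>)
      then show "Jf i u w w = Jf (Suc i) u w w" unfolding Jf_def
        apply (simp only: eval_app3[OF conjunct1[OF t1]] eval_app3[OF conjunct1[OF t2]])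
        apply simp done
    qed
    show "\<And>i u w. i \<in> {1..n} \<Longrightarrow> even i \<Longrightarrow> u \<in> A \<Longrightarrow> w \<in> A \<Longrightarrow> Jf i u u w = Jf (Suc i) u u w"
    proof -
      fix i u w assume i: "i \<in> {1..n}" and o: "even i" and uv: "u \<in> A" "w \<in> A"
      have t1: "vars (js ! (i - 1)) \<subseteq> {0,1,2} \<and> wf_trm ar (js ! (i - 1))" using tJv[of i] i by simp
      have t2: "vars (js ! (i + 1 - 1)) \<subseteq> {0,1,2} \<and> wf_trm ar (js ! (i + 1 - 1))" using tJv[of "i+1"] i by simp
      have "eval ops (\<lambda>l. if l = 0 then u else if l = 1 then u else w) (app3 (js ! (i - 1)) xv xv zv) =
            eval ops (\<lambda>l. if l = 0 then u else if l = 1 then u else w) (app3 (js ! (i + 1 - 1)) xv xv zv)"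
        by (rule deriv_eval[OF _ M wf]) (use G5 i o t1 t2 uv in \<open>auto intro: wf_app3\<close>)
      then show "Jf i u u w = Jf (Suc i) u u w" unfolding Jf_def
        apply (simp only: eval_app3[OF conjunct1[OF t1]] eval_app3[OF conjunct1[OF t2]])
        apply simp done
    qed
    show "\<And>u v w. u \<in> A \<Longrightarrow> v \<in> A \<Longrightarrow> w \<in> A \<Longrightarrow> Jf (Suc n) u v w = w"
    proof -
      fix u v w assume uv: "u \<in> A" "v \<in> A" "w \<in> A"
      have t1: "vars (js ! (n + 1 - 1)) \<subseteq> {0,1,2} \<and> wf_trm ar (js ! (n + 1 - 1))" using tJv[of "n+1"] by simp
      have "eval ops (\<lambda>l. if l = 0 then u else if l = 1 then v else w) (app3 (js ! (n + 1 - 1)) xv yv zv) =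
            eval ops (\<lambda>l. if l = 0 then u else if l = 1 then v else w) zv"
        by (rule deriv_eval[OF G6 M wf]) (use t1 uv in \<open>auto intro: wf_app3\<close>)
      then show "Jf (Suc n) u v w = w" unfolding Jf_def
        apply (simp only: eval_app3[OF conjunct1[OF t1]])
        apply simp done
    qed
    show "\<And>x y. (x,y) \<in> \<alpha> \<Longrightarrow> (x,y) \<in> comp_alt (2*r+1) \<beta> \<gamma> \<Longrightarrow>
        (x,y) \<in> (\<alpha> \<inter> (\<gamma> O \<beta>)) O comp_alt s (\<alpha> \<inter> \<gamma>) (\<alpha> \<inter> \<beta>)"
    proof -
      fix x y assume "(x,y) \<in> \<alpha>" "(x,y) \<in> comp_alt (2*r+1) \<beta> \<gamma>"
      moreover have "\<alpha> \<inter> comp_alt (2*r+1) \<beta> \<gamma> \<subseteq> (\<alpha> \<inter> (\<gamma> O \<beta>)) O comp_alt s (\<alpha> \<inter> \<gamma>) (\<alpha> \<inter> \<beta>)"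
        using H M ca cb cg unfolding satisfies_incl_def by (simp only: simp_thms)
      ultimately show "(x,y) \<in> (\<alpha> \<inter> (\<gamma> O \<beta>)) O comp_alt s (\<alpha> \<inter> \<gamma>) (\<alpha> \<inter> \<beta>)" by blast
    qed
    show "r \<ge> 1" by (fact r)
    show "(a,c) \<in> \<alpha>" "(a,c) \<in> comp_alt (4*r+1) \<beta> \<gamma>" using ac acd by auto
  qed
qed

theorem corollary4p6:
  fixes ar :: "'f \<Rightarrow> nat" and E :: "(('f, nat) trm \<times> ('f, nat) trm) set"
    and n r s :: nat
  assumes "wf_eqs ar E"
    and "r \<ge> 1" and "s \<ge> 1"
    and "has_gumm_terms ar E n"
    and "satisfies_incl ar E TYPE('a) (2 * r + 1) s"
  shows "satisfies_incl ar E TYPE('a) (4 * r + 1) (s + 4 * r * n) \<and>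
    (\<forall>q \<ge> 1. satisfies_incl ar E TYPE('a) (2 ^ q * r + 1) (s + (2 ^ (q + 1) - 4) * r * n))"
proof
  show "satisfies_incl ar E TYPE('a) (4 * r + 1) (s + 4 * r * n)"
    using gumm_step[OF assms(1,2,4,5)] .
  show "\<forall>q \<ge> 1. satisfies_incl ar E TYPE('a) (2 ^ q * r + 1) (s + (2 ^ (q + 1) - 4) * r * n)"
  proof (intro allI impI)
    fix q :: nat assume "q \<ge> 1"
    then show "satisfies_incl ar E TYPE('a) (2 ^ q * r + 1) (s + (2 ^ (q + 1) - 4) * r * n)"
    proof (induction q)
      case 0 then show ?case by simp
    next
      case (Suc q)
      show ?case
      proof (cases "q = 0")
        case True then show ?thesis using assms(5) by simp
      next
        case False
        then have IH: "satisfies_incl ar E TYPE('a) (2 ^ q * r + 1) (s + (2 ^ (q + 1) - 4) * r * n)"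
          using Suc by simp
        define r' where "r' = 2 ^ (q - 1) * r"
        have r'1: "r' \<ge> 1" using assms(2) by (simp add: r'_def)
        have e1: "2 * r' + 1 = 2 ^ q * r + 1" using False
          by (simp add: r'_def) (metis False Suc_pred bot_nat_0.not_eq_extremum mult.assoc power_Suc)
        have H': "satisfies_incl ar E TYPE('a) (2 * r' + 1) (s + (2 ^ (q + 1) - 4) * r * n)"
          using IH e1 by simp
        have res: "satisfies_incl ar E TYPE('a) (4 * r' + 1) ((s + (2 ^ (q + 1) - 4) * r * n) + 4 * r' * n)"
          using gumm_step[OF assms(1) r'1 assms(4) H'] .
        have e2: "4 * r' = 2 ^ Suc q * r" using e1 by simp
        have p4: "2 ^ (q + 1) \<ge> (4::nat)" using False
        proof -
          have "(2::nat) ^ 2 \<le> 2 ^ (q + 1)" using False by (intro power_increasing) auto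
          then show ?thesis by simp
        qed
        have e3: "(s + (2 ^ (q + 1) - 4) * r * n) + 4 * r' * n = s + (2 ^ (Suc q + 1) - 4) * r * n"
        proof -
          have "(2::nat) ^ (Suc q + 1) - 4 = (2 ^ (q + 1) - 4) + 2 ^ Suc q" using p4 by simp
          then show ?thesis using e2 by (simp add: algebra_simps)
        qed
        have e4: "4 * r' + 1 = 2 ^ Suc q * r + 1" using e2 by simp
        show ?thesis using res[unfolded e4 e3] .
      qed
    qed
  qed
qed

end
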